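(* Let $M,B,\sigma>0$ and $\mu>0$, and let $X$ be the cumulative distribution function of the normal distribution with mean $\mu$ and variance $\sigma^2$. The map $p\mapsto \frac{MB(1-X(p))}{p}$ is a strictly decreasing bijection from $(0,\infty)$ onto $(0,\infty)$; let $y:(0,\infty)\to(0,\infty)$ denote its inverse, so that $D=MB(1-X(y(D)))/y(D)$. Then the function $F(D)=y(D)\,D$ is concave on $D>0$.
   Context: $F(D)=y(D)D$ is the advertising revenue of a content provider when user demand is $D$: $M$ advertisers with budget $B$ and normally distributed valuations $v$ per attention demand $MB(1-X(p^a))/p^a$ attentions at price $p^a$, and the provider sets the price $p^a=y(D)$ at which this equals $D$. *)

theory Defs
  imports "HOL-Probability.Probability"
begin

text \<open>Cumulative distribution function of the normal distribution with mean mu and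
  standard deviation s (variance s squared).\<close>
definition normal_cdf :: "real \<Rightarrow> real \<Rightarrow> real \<Rightarrow> real" where
  "normal_cdf mu s = cdf (density lborel (normal_density mu s))"

definition ad_demand :: "real \<Rightarrow> real \<Rightarrow> real \<Rightarrow> real \<Rightarrow> real \<Rightarrow> real" where
  "ad_demand M B mu s p = M * B * (1 - normal_cdf mu s p) / p"

end

theory Submission imports Defs begin

lemma hh_alg:
  fixes m p a u :: real
  assumes "m > 0" "p > 0" "p * a + u > 0"
  shows "inverse (m * (- a * p - u) / p\<^sup>2) * (m * u / p) + 1 * p = a * p\<^sup>2 / (p * a + u)"
proof -
  define q where "q = p * a + u"
  have q: "q > 0" using assms unfolding q_def by simp
  have e1: "m * (- a * p - u) / p\<^sup>2 = - (m * q / p\<^sup>2)" unfolding q_def by (simp add: algebra_simps minus_divide_left[symmetric]) (simp add: diff_divide_distrib add_divide_distrib)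
  have e2: "inverse (m * q / p\<^sup>2) * (m * u / p) = p * u / q"
    using assms q by (simp add: field_simps power2_eq_square)
  have e3: "- (p * u / q) + 1 * p = a * p\<^sup>2 / q"
    using q unfolding q_def by (simp add: field_simps power2_eq_square)
  show ?thesis unfolding e1 inverse_minus_eq using e2 e3 unfolding q_def by simp
qed
lemma cdf_integral:
  assumes "s > 0"
  shows "normal_cdf mu s x = (\<integral>t. normal_density mu s t * indicator {..x} t \<partial>lborel)"
proof -
  have "emeasure (density lborel (normal_density mu s)) {..x}
      = (\<integral>\<^sup>+ t. ennreal (normal_density mu s t) * indicator {..x} t \<partial>lborel)"
    by (rule emeasure_density) auto
  also have "\<dots> = (\<integral>\<^sup>+ t. ennreal (normal_density mu s t * indicator {..x} t) \<partial>lborel)"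
    by (intro nn_integral_cong) (auto simp: indicator_def)
  also have "\<dots> = ennreal (\<integral>t. normal_density mu s t * indicator {..x} t \<partial>lborel)"
    by (rule nn_integral_eq_integral) (auto intro!: integrable_real_mult_indicator simp: assms)
  finally show ?thesis
    unfolding normal_cdf_def cdf_def measure_def
    by (simp add: integral_nonneg)
qed

lemma cdf_diff:
  assumes "a \<le> x"
    and "s > 0"
  shows "normal_cdf mu s x - normal_cdf mu s a = integral {a..x} (normal_density mu s)"
proof -
  have "normal_cdf mu s x - normal_cdf mu s a
     = (\<integral>t. normal_density mu s t * indicator {..x} t - normal_density mu s t * indicator {..a} t \<partial>lborel)"
    unfolding cdf_integral[OF assms(2)]
    by (rule Bochner_Integration.integral_diff[symmetric]) (auto intro!: integrable_real_mult_indicator simp: assms)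
  also have "\<dots> = (\<integral>t. indicator {a<..x} t *\<^sub>R normal_density mu s t \<partial>lborel)"
    using assms by (intro Bochner_Integration.integral_cong) (auto simp: indicator_def)
  also have "\<dots> = integral {a<..x} (normal_density mu s)"
  proof -
    have "integrable lborel (\<lambda>t. normal_density mu s t * indicator {a<..x} t)"
      using assms by (intro integrable_real_mult_indicator) auto
    then have "integrable lborel (\<lambda>t. indicator {a<..x} t * normal_density mu s t)"
      by (simp add: mult.commute)
    then show ?thesis
    using set_borel_integral_eq_integral(2)[of "{a<..x}" "normal_density mu s"]
    unfolding set_lebesgue_integral_def
    by (auto simp: set_integrable_def)
  qed
  also have "\<dots> = integral {a..x} (normal_density mu s)"
    by (rule integral_spike_set [OF empty_imp_negligible negligible_subset [OF negligible_sing [of a]]]) auto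
  finally show ?thesis .
qed

definition hh :: "real \<Rightarrow> real \<Rightarrow> real \<Rightarrow> real" where
  "hh mu s p = normal_density mu s p * p\<^sup>2 / (p * normal_density mu s p + (1 - normal_cdf mu s p))"

context
  fixes mu s :: real
  assumes s_pos: "s > 0"
begin

lemma phi_deriv [derivative_intros]:
  "D = -(x-mu)/s\<^sup>2 * normal_density mu s x \<Longrightarrow>
   (normal_density mu s has_real_derivative D) (at x within S)"
proof -
  have "((\<lambda>x. exp (-(x - mu)\<^sup>2/ (2 * s\<^sup>2))) has_real_derivative
      exp (-(x - mu)\<^sup>2/ (2 * s\<^sup>2)) * (-(x-mu)/s\<^sup>2)) (at x within S)"
    using s_pos by (auto intro!: derivative_eq_intros simp: field_simps power2_eq_square)
  from DERIV_cmult[OF this, of "1 / sqrt (2 * pi * s\<^sup>2)"]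
  show "D = -(x-mu)/s\<^sup>2 * normal_density mu s x \<Longrightarrow> ?thesis"
    unfolding normal_density_def[abs_def] by (simp add: field_simps)
qed

lemma phi_cont: "continuous_on A (normal_density mu s)"
  unfolding normal_density_def using s_pos by (intro continuous_intros) auto

lemma cdf_deriv0: "(normal_cdf mu s has_real_derivative normal_density mu s x) (at x)"
proof -
  have D: "((\<lambda>t. integral {x-1..t} (normal_density mu s)) has_real_derivative normal_density mu s x) (at x)"
    using integral_has_real_derivative[OF phi_cont, of x "x-1" "x+1"] at_within_Icc_at[of "x-1" x "x+1"]
    by simp
  have D2: "((\<lambda>t. normal_cdf mu s (x-1) + integral {x-1..t} (normal_density mu s)) has_real_derivative normal_density mu s x) (at x)"
    using DERIV_add[OF DERIV_const D] by simp
  show ?thesis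
  proof (rule has_field_derivative_transform_within_open[OF D2, of "{x-1<..<x+1}"])
    fix t assume "t \<in> {x-1<..<x+1}"
    then show "normal_cdf mu s (x-1) + integral {x-1..t} (normal_density mu s) = normal_cdf mu s t"
      using cdf_diff[where a="x-1" and x=t and mu=mu and s=s] s_pos by auto
  qed auto
qed

lemma cdf_deriv [derivative_intros]:
  "D = normal_density mu s x \<Longrightarrow> (normal_cdf mu s has_real_derivative D) (at x within S)"
  using cdf_deriv0 by (auto intro: has_field_derivative_at_within)

lemma rd: "real_distribution (density lborel (normal_density mu s))"
  by (simp add: real_distribution_def real_distribution_axioms_def prob_space_normal_density s_pos)

lemma cdf_le1: "normal_cdf mu s x \<le> 1"
  unfolding normal_cdf_def using real_distribution.cdf_bounded_prob[OF rd] by simp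

lemma cdf_top: "(normal_cdf mu s \<longlongrightarrow> 1) at_top"
  unfolding normal_cdf_def using real_distribution.cdf_lim_at_top_prob[OF rd] by simp

lemma cdf_nonneg: "normal_cdf mu s x \<ge> 0"
  unfolding normal_cdf_def using finite_borel_measure.cdf_nonneg real_distribution.finite_borel_measure_M[OF rd] by blast

lemma cdf_strict: "x < y \<Longrightarrow> normal_cdf mu s x < normal_cdf mu s y"
  by (rule DERIV_pos_imp_increasing[where f="normal_cdf mu s"]) 
     (auto intro!: exI cdf_deriv0 normal_density_pos s_pos)

lemma U_pos: "1 - normal_cdf mu s x > 0"
  using cdf_strict[of x "x+1"] cdf_le1[of "x+1"] by simp

lemma cdf_cont: "isCont (normal_cdf mu s) x"
  using cdf_deriv0 DERIV_isCont by blast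

lemma phi_le: "normal_density mu s x \<le> 1 / sqrt (2 * pi * s\<^sup>2)"
  unfolding normal_density_def using s_pos by (auto simp: divide_simps)

lemma mills:
  assumes p: "p > mu"
  shows "(p - mu) * (1 - normal_cdf mu s p) < s\<^sup>2 * normal_density mu s p"
proof -
  define k where "k q = s\<^sup>2 * normal_density mu s q / (q - mu) - (1 - normal_cdf mu s q)" for q
  have kd: "(k has_real_derivative -(s\<^sup>2 * normal_density mu s q)/(q-mu)\<^sup>2) (at q)" if "q > mu" for q
  proof -
    have d1: "mu * mu + q * q - mu * (q * 2) \<noteq> 0"
    proof -
      have "mu * mu + q * q - mu * (q * 2) = (q-mu)*(q-mu)" by algebra
      then show ?thesis using that by simp
    qed
    have d2: "mu * (mu * (s * s)) + q * (q * (s * s)) - mu * (q * (s * (s * 2))) \<noteq> 0"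
    proof -
      have "mu * (mu * (s * s)) + q * (q * (s * s)) - mu * (q * (s * (s * 2))) = (q - mu) * (q - mu) * (s * s)"
        by algebra
      then show ?thesis using that s_pos by simp
    qed
    show ?thesis
      unfolding k_def[abs_def] using that s_pos d1 d2
      by (auto intro!: derivative_eq_intros simp: field_simps power2_eq_square) algebra?
  qed
  have sp: "0 < s\<^sup>2 * normal_density mu s x" for x using normal_density_pos[OF s_pos, of mu x] s_pos by simp
  have kdec: "k b < k a" if "mu < a" "a < b" for a b
    by (rule DERIV_neg_imp_decreasing[OF that(2)]) 
       (use that s_pos in \<open>auto intro!: exI kd sp divide_pos_pos\<close>)
  have lim1: "((\<lambda>q. s\<^sup>2 * (1 / sqrt (2 * pi * s\<^sup>2)) / (q - mu)) \<longlongrightarrow> 0) at_top"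
  proof -
    have "filterlim (\<lambda>q. q - mu) at_top at_top"
      using filterlim_tendsto_add_at_top[OF tendsto_const[of "-mu"] filterlim_ident] by simp
    then have "filterlim (\<lambda>q. q - mu) at_infinity at_top"
      by (rule filterlim_at_top_imp_at_infinity)
    then show ?thesis by (intro tendsto_divide_0[OF tendsto_const])
  qed
  have lim2: "((\<lambda>q. s\<^sup>2 * normal_density mu s q / (q - mu)) \<longlongrightarrow> 0) at_top"
  proof (rule tendsto_sandwich[OF _ _ tendsto_const lim1])
    show "\<forall>\<^sub>F q in at_top. 0 \<le> s\<^sup>2 * normal_density mu s q / (q - mu)"
      using eventually_gt_at_top[of mu] by eventually_elim auto
    show "\<forall>\<^sub>F q in at_top. s\<^sup>2 * normal_density mu s q / (q - mu) \<le> s\<^sup>2 * (1 / sqrt (2 * pi * s\<^sup>2)) / (q - mu)"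
      using eventually_gt_at_top[of mu] 
      by eventually_elim (intro divide_right_mono mult_left_mono phi_le, auto)
  qed
  have klim: "(k \<longlongrightarrow> 0) at_top"
    unfolding k_def using tendsto_diff[OF lim2 tendsto_diff[OF tendsto_const[of 1] cdf_top]] by simp
  have "0 \<le> k (p+1)"
  proof (rule tendsto_upperbound[OF klim])
    show "\<forall>\<^sub>F i in at_top. k i \<le> k (p + 1)"
      using eventually_ge_at_top[of "p+1"] 
    proof eventually_elim
      case (elim i) then show ?case using kdec[of "p+1" i] p by (cases "i = p+1") auto
    qed
  qed simp
  with kdec[of p "p+1"] p have "k p > 0" by simp
  then show ?thesis using p unfolding k_def by (simp add: field_simps)
qed

lemma hh_deriv:
  assumes "x > 0"
  shows "(hh mu s has_real_derivative
     x * normal_density mu s x * (2 * x * normal_density mu s x + 2 * (1 - normal_cdf mu s x)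
        - x * ((x - mu) / s\<^sup>2) * (1 - normal_cdf mu s x))
     / (x * normal_density mu s x + (1 - normal_cdf mu s x))\<^sup>2) (at x)"
proof -
  have Q: "x * normal_density mu s x + (1 - normal_cdf mu s x) > 0"
    using U_pos[of x] normal_density_pos[OF s_pos, of mu x] assms by (simp add: add_pos_pos)
  show ?thesis
  proof -
    let ?a = "normal_density mu s x" and ?u = "1 - normal_cdf mu s x" and ?t = "(x - mu)/s\<^sup>2"
    have N: "((\<lambda>x. normal_density mu s x * x\<^sup>2) has_real_derivative (-?t * ?a) * x\<^sup>2 + ?a * (2*x)) (at x)"
      using s_pos by (auto intro!: derivative_eq_intros) (simp add: field_simps)
    have Qd: "((\<lambda>x. x * normal_density mu s x + (1 - normal_cdf mu s x)) has_real_derivative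
          (?a + x * (-?t * ?a) - ?a)) (at x)"
      using s_pos by (auto intro!: derivative_eq_intros) (simp add: field_simps)
    have id: "((-t*a)*x\<^sup>2 + a*(2*x))*(x*a+u) - a*x\<^sup>2*(a + x*(-t*a) - a) = x*a*(2*x*a + 2*u - x*t*u)"
      for t a u :: real by algebra
    from DERIV_divide[OF N Qd] Q
    show ?thesis unfolding hh_def[abs_def]
      by (simp only: id power2_eq_square[of "_ + _"])
  qed
qed

lemma hh_deriv_pos:
  assumes "x > 0"
  shows "x * normal_density mu s x * (2 * x * normal_density mu s x + 2 * (1 - normal_cdf mu s x)
        - x * ((x - mu) / s\<^sup>2) * (1 - normal_cdf mu s x))
     / (x * normal_density mu s x + (1 - normal_cdf mu s x))\<^sup>2 > 0"
proof -
  have ph: "normal_density mu s x > 0" using normal_density_pos[OF s_pos] by auto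
  have U: "1 - normal_cdf mu s x > 0" by (rule U_pos)
  have "x * ((x - mu) / s\<^sup>2) * (1 - normal_cdf mu s x) \<le> x * normal_density mu s x"
  proof (cases "x \<le> mu")
    case True
    have "x * ((x - mu) / s\<^sup>2) * (1 - normal_cdf mu s x) \<le> 0"
      using True assms U s_pos by (intro mult_nonpos_nonneg mult_nonneg_nonpos divide_nonpos_pos) auto
    moreover have "x * normal_density mu s x > 0" using ph assms by simp
    ultimately show ?thesis by linarith
  next
    case False
    then have "(x - mu) * (1 - normal_cdf mu s x) < s\<^sup>2 * normal_density mu s x" by (intro mills) auto
    then have "((x - mu) / s\<^sup>2) * (1 - normal_cdf mu s x) < normal_density mu s x"
      using s_pos by (simp add: field_simps)
    then have "x * ((x - mu) / s\<^sup>2 * (1 - normal_cdf mu s x)) < x * normal_density mu s x"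
      using assms by (rule mult_strict_left_mono)
    then show ?thesis by (metis mult.assoc less_imp_le)
  qed
  then have "2 * x * normal_density mu s x + 2 * (1 - normal_cdf mu s x)
        - x * ((x - mu) / s\<^sup>2) * (1 - normal_cdf mu s x) > 0"
  proof -
    have "x * normal_density mu s x > 0" using ph assms by simp
    moreover have "2 * x * normal_density mu s x = 2 * (x * normal_density mu s x)" by simp
    have aux: "0 < (a::real) \<Longrightarrow> 0 < c \<Longrightarrow> b \<le> a \<Longrightarrow> 0 < 2*a + 2*c - b" for a b c by linarith
    ultimately show ?thesis using aux[OF _ U \<open>x * ((x - mu) / s\<^sup>2) * (1 - normal_cdf mu s x) \<le> x * normal_density mu s x\<close>]
      by simp
  qed
  moreover have "x * normal_density mu s x + (1 - normal_cdf mu s x) > 0"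
    using ph U assms by (simp add: add_pos_pos)
  ultimately show ?thesis using ph U assms by (intro divide_pos_pos mult_pos_pos) auto
qed

lemma hh_mono:
  assumes "0 < p" "p \<le> q"
  shows "hh mu s p \<le> hh mu s q"
proof (cases "p = q")
  case False
  then have "p < q" using assms by auto
  have "hh mu s p < hh mu s q"
  proof (rule DERIV_pos_imp_increasing[OF \<open>p < q\<close>])
    fix x assume "p \<le> x" "x \<le> q"
    then have x: "x > 0" using assms by linarith
    show "\<exists>y. DERIV (hh mu s) x :> y \<and> 0 < y" using hh_deriv[OF x] hh_deriv_pos[OF x] by blast
  qed
  then show ?thesis by simp
qed simp

end

theorem lemma7:
  fixes M B s mu :: real
  assumes "M > 0" and "B > 0" and "s > 0" and "mu > 0"
  defines "g \<equiv> ad_demand M B mu s"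
  defines "y \<equiv> inv_into {0<..} g"
  shows "(\<forall>p\<in>{0<..}. \<forall>q\<in>{0<..}. p < q \<longrightarrow> g q < g p)
       \<and> bij_betw g {0<..} {0<..}
       \<and> concave_on {0<..} (\<lambda>D. y D * D)"
proof -
  have s: "s > 0" by fact
  have MB: "M * B > 0" using assms by simp
  have geq: "g = (\<lambda>p. M * B * (1 - normal_cdf mu s p) / p)"
    by (rule ext) (simp add: g_def ad_demand_def)
  have Upos: "1 - normal_cdf mu s p > 0" for p using U_pos[OF s] .
  have Ule1: "1 - normal_cdf mu s p \<le> 1" for p using cdf_nonneg[OF s, of mu p] by simp
  have Udec: "1 - normal_cdf mu s q < 1 - normal_cdf mu s p" if "p < q" for p q
    using cdf_strict[OF s that] by simp
  have gpos: "g p > 0" if "p > 0" for p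
    using that MB Upos[of p] unfolding geq by simp
  have mono: "\<forall>p\<in>{0<..}. \<forall>q\<in>{0<..}. p < q \<longrightarrow> g q < g p"
  proof (intro ballI impI)
    fix p q :: real assume pq: "p \<in> {0<..}" "q \<in> {0<..}" "p < q"
    have "M * B * (1 - normal_cdf mu s q) / q < M * B * (1 - normal_cdf mu s p) / q"
      using pq MB Udec[OF pq(3)] by (intro divide_strict_right_mono mult_strict_left_mono) auto
    also have "\<dots> < M * B * (1 - normal_cdf mu s p) / p"
      using pq MB Upos[of p] assms(1,2) by (intro divide_strict_left_mono mult_pos_pos) auto
    finally show "g q < g p" unfolding geq .
  qed
  have inj: "inj_on g {0<..}"
  proof (rule inj_onI)
    fix a b :: real assume ab: "a \<in> {0<..}" "b \<in> {0<..}" "g a = g b"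
    show "a = b"
    proof (cases a b rule: linorder_cases)
      case less then show ?thesis using mono ab by force
    next
      case greater then show ?thesis using mono ab by force
    qed
  qed
  have gcont: "isCont g p" if "p > 0" for p
    unfolding geq using that by (intro continuous_intros cdf_cont[OF s]) auto
  have surj: "g ` {0<..} = {0<..}"
  proof
    show "g ` {0<..} \<subseteq> {0<..}" using gpos by auto
  next
    show "{0<..} \<subseteq> g ` {0<..}"
    proof
      fix D :: real assume "D \<in> {0<..}"
      then have D: "D > 0" by simp
      define c where "c = M * B * (1 - normal_cdf mu s 1)"
      have c: "c > 0" unfolding c_def using MB Upos[of 1] by simp
      define p1 where "p1 = min 1 (c / (2 * D))"
      have p1: "p1 > 0" "p1 \<le> 1" "p1 \<le> c / (2*D)" using c D unfolding p1_def by auto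
      define p2 where "p2 = max (p1 + 1) (2 * M * B / D)"
      have p2: "p2 > p1" "p2 \<ge> 2 * M * B / D" unfolding p2_def by auto
      have "g p1 \<ge> c / p1"
      proof -
        have "1 - normal_cdf mu s 1 \<le> 1 - normal_cdf mu s p1"
          using Udec[of p1 1] p1 by (cases "p1 = 1") auto
        then show ?thesis unfolding geq c_def using p1 MB
          by (intro divide_right_mono mult_left_mono) auto
      qed
      moreover have "c / p1 \<ge> 2 * D"
        using p1 c D by (simp add: field_simps)
      ultimately have g1: "g p1 \<ge> D" using D by simp
      have "g p2 \<le> M * B / p2"
        unfolding geq using p1 p2 MB Ule1[of p2]
        by (intro divide_right_mono) (auto intro: mult_left_le)
      also have "\<dots> \<le> D / 2"
        using p2 D MB p1 by (simp add: field_simps)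
      finally have g2: "g p2 \<le> D" using D by simp
      have "continuous_on {p1..p2} g"
        using gcont p1 by (intro continuous_at_imp_continuous_on) auto
      then obtain p where "p1 \<le> p" "p \<le> p2" "g p = D"
        using IVT2'[of g p2 D p1] g1 g2 p2 by auto
      then show "D \<in> g ` {0<..}" using p1 by force
    qed
  qed
  have bij: "bij_betw g {0<..} {0<..}" using inj surj by (simp add: bij_betw_def)
  have yin: "y D > 0" if "D > 0" for D
    using inv_into_into[of D g "{0<..}"] surj that unfolding y_def by auto
  have gy: "g (y D) = D" if "D > 0" for D
    using f_inv_into_f[of D g "{0<..}"] surj that unfolding y_def by auto
  have yg: "y (g p) = p" if "p > 0" for p
    using inv_into_f_f[OF inj] that unfolding y_def by auto
  define g' where "g' p = M * B * (- normal_density mu s p * p - (1 - normal_cdf mu s p)) / p\<^sup>2" for p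
  have gder: "(g has_real_derivative g' p) (at p)" if "p > 0" for p
    unfolding geq g'_def using that
    by (auto intro!: derivative_eq_intros cdf_deriv[OF s]) (simp add: field_simps power2_eq_square)
  have g'neg: "g' p < 0" if "p > 0" for p
  proof -
    have "normal_density mu s p * p > 0"
      using normal_density_pos[OF s, of mu p] that by simp
    then have "- normal_density mu s p * p - (1 - normal_cdf mu s p) < 0"
      using Upos[of p] by linarith
    then show ?thesis unfolding g'_def using MB that
      by (intro divide_neg_pos mult_pos_neg) auto
  qed
  have ycont: "isCont y D" if "D > 0" for D
  proof -
    have "isCont y (g (y D))"
    proof (rule isCont_inverse_function[where d="y D / 2" and f=g and g=y and x="y D"])
      fix z assume "\<bar>z - y D\<bar> \<le> y D / 2"
      then have "-(z - y D) \<le> y D / 2" by (rule abs_le_D2)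
      then have z: "z > 0" using yin[OF that] by linarith
      show "y (g z) = z" by (rule yg[OF z])
      show "isCont g z" by (rule gcont[OF z])
    qed (use yin[OF that] in simp)
    then show ?thesis using gy[OF that] by simp
  qed
  have yder: "(y has_real_derivative inverse (g' (y D))) (at D)" if "D > 0" for D
    by (rule DERIV_inverse_function[where a=0 and b="D+1"])
       (use that yin[OF that] g'neg[of "y D"] in \<open>auto intro!: gder gy ycont\<close>)
  have hheq: "hh mu s p = normal_density mu s p * p\<^sup>2 / (p * normal_density mu s p + (1 - normal_cdf mu s p))" for p
    by (simp add: hh_def)
  have Fder: "((\<lambda>D. - (y D * D)) has_real_derivative - hh mu s (y D)) (at D)" if "D > 0" for D
  proof -
    have d: "((\<lambda>D. - (y D * D)) has_real_derivative - (inverse (g' (y D)) * D + 1 * y D)) (at D)"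
      by (intro DERIV_minus DERIV_mult yder[OF that] DERIV_ident)
    let ?p = "y D"
    have p: "?p > 0" using yin[OF that] .
    have Dp: "D = M * B * (1 - normal_cdf mu s ?p) / ?p" using gy[OF that] unfolding geq by simp
    have Q: "?p * normal_density mu s ?p + (1 - normal_cdf mu s ?p) > 0"
      using Upos[of ?p] normal_density_pos[OF s, of mu ?p] p by (simp add: add_pos_pos)
    have Q': "- normal_density mu s ?p * ?p - (1 - normal_cdf mu s ?p) \<noteq> 0"
      using Q by (simp add: algebra_simps)
    have "inverse (g' ?p) * (M * B * (1 - normal_cdf mu s ?p) / ?p) + 1 * ?p = hh mu s ?p"
      unfolding g'_def hheq using p MB Q by (intro hh_alg) (auto simp: mult.commute)
    then have "inverse (g' ?p) * D + 1 * ?p = hh mu s ?p"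
      by (simp only: Dp[symmetric])
    then have e: "- (inverse (g' ?p) * D + 1 * ?p) = - hh mu s ?p" by simp
    from d show ?thesis unfolding e .
  qed
  have conc: "concave_on {0<..} (\<lambda>D. y D * D)"
    unfolding concave_on_def
  proof (rule convex_on_realI[where f'="\<lambda>D. - hh mu s (y D)"])
    fix D1 D2 :: real assume D: "D1 \<in> {0<..}" "D2 \<in> {0<..}" "D1 \<le> D2"
    have "y D2 \<le> y D1"
    proof (rule ccontr)
      assume "\<not> y D2 \<le> y D1"
      then have "g (y D2) < g (y D1)" using mono yin D by auto
      then show False using gy D by auto
    qed
    then show "- hh mu s (y D1) \<le> - hh mu s (y D2)"
      using hh_mono[OF s, of "y D2" "y D1"] yin D by auto
  qed (use Fder in auto)
  show ?thesis using mono bij conc by blast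
qed

end
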